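(* Let $\mathcal{W}$ be a finite set and $\Delta<0.5$. If $\mathbf{P}_1=(P_{1,w})_{w\in\mathcal{W}}$ and $\mathbf{P}_2=(P_{2,w})_{w\in\mathcal{W}}$ are probability vectors with $\max_wP_{1,w}\le1-\Delta$ and $\max_wP_{2,w}\le1-\Delta$, then $$\sum_{w\in\mathcal{W}}\sum_{j\in\mathcal{W}}(P_{1,w}\wedge P_{2,j})(1-P_{1,w})(1-P_{2,j})\ \ge\ \Delta(1-\Delta)^2+3\Delta^2(1-\Delta).$$
   Context: $a\wedge b=\min(a,b)$. *)

theory Defs
  imports Main "HOL-Analysis.Analysis"
begin

end

theory Submission imports Defs begin
lemma P2a: fixes a b d :: real assumes "0<d" "d<1/2" "0\<le>b" "b\<le>1" "d\<le>a" "a\<le>1-d" "b\<le>d"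
  shows "(1-2*d)*(b*(1-a)) \<ge> (1-d-a)*(b*(1-d)) + (a-d)*(b*d)"
  by (simp add: algebra_simps)
lemma P2b: fixes a b d :: real assumes "0<d" "d<1/2" "0\<le>b" "b\<le>1" "d\<le>a" "a\<le>1-d" "d\<le>b" "b \<le> a"
  shows "(1-2*d)*(b*(1-a)) \<ge> (1-d-a)*(d*(1-d)) + (a-d)*(b*d)"
proof -
  have "0 \<le> (1-d)*(1-d-a)*(b-d)" using assms by simp
  moreover have "(1-2*d)*(b*(1-a)) - ((1-d-a)*(d*(1-d)) + (a-d)*(b*d)) = (1-d)*(1-d-a)*(b-d)"
    by (simp add: algebra_simps)
  ultimately show ?thesis by linarith
qed
lemma P2c: fixes a b d :: real assumes "0<d" "d<1/2" "0\<le>b" "b\<le>1" "d\<le>a" "a\<le>1-d" "d\<le>b" "a \<le> b"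
  shows "(1-2*d)*(a*(1-a)) \<ge> (1-d-a)*(d*(1-d)) + (a-d)*(min (1-d) b*d)"
proof -
  have "(a-d)*(min (1-d) b*d) \<le> (a-d)*((1-d)*d)"
    using assms by (intro mult_left_mono mult_right_mono) auto
  moreover have "0 \<le> (1-2*d)*(a-d)*(1-d-a)" using assms by simp
  moreover have "(1-2*d)*(a*(1-a)) - ((1-d-a)*(d*(1-d)) + (a-d)*((1-d)*d)) = (1-2*d)*(a-d)*(1-d-a)"
    by (simp add: algebra_simps)
  ultimately show ?thesis by linarith
qed
lemma P1: fixes a b d :: real assumes "0<d" "0\<le>b" "0\<le>a" "a\<le>d" "d<1"
  shows "d*(min a b*(1-a)) \<ge> a*(min d b*(1-d))"
proof -
  have m: "d * min a b \<ge> a * min d b"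
  proof (cases "b \<le> a")
    case True
    then have "min a b = b" "min d b = b" using assms by auto
    then show ?thesis using assms True by (simp add: mult_right_mono)
  next
    case False
    then have e: "min a b = a" by auto
    have "a * min d b \<le> a * d" using assms by (intro mult_left_mono) auto
    then show ?thesis using e by (simp add: mult.commute)
  qed
  have "a*(min d b*(1-d)) = (a*min d b)*(1-d)" by simp
  also have "\<dots> \<le> (d*min a b)*(1-a)" by (rule mult_mono[OF m]) (use assms in auto)
  finally show ?thesis by simp
qed
definition KK :: "real \<Rightarrow> real \<Rightarrow> real" where
  "KK x y = min x y * (1 - x) * (1 - y)"

lemma KK_sym: "KK x y = KK y x"
  unfolding KK_def by (simp add: min.commute algebra_simps)

lemma min_sub: fixes f :: "'a \<Rightarrow> real"
  assumes "finite A" "\<forall>x\<in>A. f x \<ge> 0" "d \<ge> 0"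
  shows "min (sum f A) d \<le> (\<Sum>x\<in>A. min (f x) d)"
  using assms
proof (induction A rule: finite_induct)
  case empty then show ?case by simp
next
  case (insert x F)
  have "sum f F \<ge> 0" using insert by (intro sum_nonneg) auto
  moreover have "f x \<ge> 0" using insert by auto
  ultimately have "min (f x + sum f F) d \<le> min (f x) d + min (sum f F) d"
    using insert by (auto simp: min_def)
  with insert show ?case by auto
qed

lemma m_bound: fixes a :: "'a \<Rightarrow> real"
  assumes "finite W" "0 \<le> d" "d < 1/2" "\<forall>w\<in>W. 0 \<le> a w \<and> a w \<le> 1 - d" "sum a W = 1"
  shows "(\<Sum>w\<in>W. min (a w) d) \<ge> 2 * d"
proof (cases "\<forall>w\<in>W. a w \<le> d")
  case True
  then have "(\<Sum>w\<in>W. min (a w) d) = sum a W" by (intro sum.cong) auto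
  then show ?thesis using assms by simp
next
  case False
  then obtain u where u: "u \<in> W" "a u > d" by auto
  have s: "(\<Sum>w\<in>W. min (a w) d) = min (a u) d + (\<Sum>w\<in>W-{u}. min (a w) d)"
    using u assms by (simp add: sum.remove)
  have "sum a W = a u + sum a (W - {u})" using u assms by (simp add: sum.remove)
  then have "sum a (W - {u}) \<ge> d" using assms u by auto
  moreover have "min (sum a (W - {u})) d \<le> (\<Sum>w\<in>W-{u}. min (a w) d)"
    using assms by (intro min_sub) auto
  ultimately show ?thesis using s u by auto
qed

lemma P2: fixes a b d :: real assumes "0<d" "d<1/2" "0\<le>b" "b\<le>1" "d\<le>a" "a\<le>1-d"
  shows "(1-2*d)*(min a b*(1-a)) \<ge> (1-d-a)*(min d b*(1-d)) + (a-d)*(min (1-d) b*(1-(1-d)))"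
proof (cases "b \<le> d")
  case True
  then have "b \<le> a" "b \<le> 1-d" using assms by auto
  then have "min a b = b" "min d b = b" "min (1-d) b = b" using True by auto
  then show ?thesis using P2a[OF assms True] by simp
next
  case False
  show ?thesis
  proof (cases "b \<le> a")
    case True
    then have "b \<le> 1-d" using assms by auto
    then have "min a b = b" "min d b = d" "min (1-d) b = b" using True False by auto
    then show ?thesis using P2b[OF assms _ True] False by simp
  next
    case False2: False
    then have "min a b = a" "min d b = d" using False by auto
    then show ?thesis using P2c[OF assms] False False2 by simp
  qed
qed

lemma C1: fixes b d :: real assumes "0<d" "d<1/2" "0\<le>b" "b\<le>1"
  shows "(1-2*d)*(min d b*(1-d)) \<ge> d*(min (1-d) b * (1-(1-d)) - min d b*(1-d))"
proof -
  define x where "x = min d b"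
  define y where "y = min (1-d) b"
  have x0: "x \<ge> 0" using assms unfolding x_def by auto
  have 1: "d*y \<le> (1-d)*x"
  proof (cases "b \<le> d")
    case True
    then have "x = b" "y = b" using assms unfolding x_def y_def by auto
    then show ?thesis using assms by (simp add: mult_right_mono)
  next
    case False
    then have "x = d" "y \<le> 1-d" using assms unfolding x_def y_def by auto
    then show ?thesis using assms by (simp add: mult_left_mono mult.commute)
  qed
  have "d*(d*y) \<le> d*((1-d)*x)" using 1 assms by (intro mult_left_mono) auto
  also have "\<dots> \<le> (1-d)*((1-d)*x)" using assms x0 by (intro mult_right_mono) auto
  finally have "d*(d*y) \<le> (1-d)*((1-d)*x)" .
  then have "(1-2*d)*(x*(1-d)) \<ge> d*(y*d - x*(1-d))" by (simp add: algebra_simps)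
  then show ?thesis unfolding x_def y_def by simp
qed

lemma oneD: fixes a :: "'a \<Rightarrow> real"
  assumes "finite W" "0 < d" "d < 1/2" "\<forall>w\<in>W. 0 \<le> a w \<and> a w \<le> 1 - d" "sum a W = 1"
    "0 \<le> b" "b \<le> 1"
  shows "(\<Sum>w\<in>W. KK (a w) b) \<ge> KK d b + KK (1-d) b"
proof -
  define g where "g x = min x b * (1 - x)" for x
  define gd where "gd = g d"
  define gM where "gM = g (1-d)"
  define m where "m = (\<Sum>w\<in>W. min (a w) d)"
  have pw: "d*(1-2*d)*g (a w) \<ge> min (a w) d * (1-2*d) * gd + (a w - min (a w) d) * d * (gM - gd)"
    if "w \<in> W" for w
  proof (cases "a w \<le> d")
    case True
    have "a w * gd \<le> d * g (a w)" unfolding gd_def g_def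
      using P1[of d b "a w"] True assms that by auto
    then have "(1-2*d) * (a w * gd) \<le> (1-2*d) * (d * g (a w))"
      using assms by (intro mult_left_mono) auto
    then show ?thesis using True by (simp add: min_def algebra_simps)
  next
    case False
    have "(1-2*d)*g (a w) \<ge> (1-d-a w)*gd + (a w-d)*gM" unfolding gd_def gM_def g_def
      using P2[of d b "a w"] False assms that by auto
    then have "d*((1-2*d)*g (a w)) \<ge> d*((1-d-a w)*gd + (a w-d)*gM)"
      using assms by (intro mult_left_mono) auto
    then show ?thesis using False by (simp add: min_def algebra_simps)
  qed
  have "d*(1-2*d)*(\<Sum>w\<in>W. g (a w)) = (\<Sum>w\<in>W. d*(1-2*d)*g (a w))"
    by (simp add: sum_distrib_left)
  also have "\<dots> \<ge> (\<Sum>w\<in>W. min (a w) d * (1-2*d) * gd + (a w - min (a w) d) * d * (gM - gd))"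
    using pw by (intro sum_mono) auto
  finally have s1: "d*(1-2*d)*(\<Sum>w\<in>W. g (a w)) \<ge> m * (1-2*d) * gd + (1 - m) * d * (gM - gd)"
    using assms(5) unfolding m_def by (simp add: sum.distrib sum_subtractf sum_distrib_right[symmetric])
  have C: "(1-2*d)*gd - d*(gM-gd) \<ge> 0" using C1[OF assms(2,3,6,7)] unfolding gd_def gM_def g_def by simp
  have mb: "m \<ge> 2*d" unfolding m_def using m_bound[OF assms(1) _ assms(3,4,5)] assms(2) by simp
  have "m * ((1-2*d)*gd - d*(gM-gd)) \<ge> 2*d*((1-2*d)*gd - d*(gM-gd))"
    using mb C by (intro mult_right_mono) auto
  then have "d*(1-2*d)*(\<Sum>w\<in>W. g (a w)) \<ge> d*(1-2*d)*(gd + gM)"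
    using s1 by (simp add: algebra_simps)
  then have sg: "(\<Sum>w\<in>W. g (a w)) \<ge> gd + gM"
    using assms by (simp add: mult_le_cancel_left)
  have "(\<Sum>w\<in>W. KK (a w) b) = (\<Sum>w\<in>W. g (a w)) * (1-b)"
    unfolding KK_def g_def by (simp add: sum_distrib_right)
  also have "\<dots> \<ge> (gd + gM) * (1-b)" using sg assms by (intro mult_right_mono) auto
  finally show ?thesis unfolding KK_def gd_def gM_def g_def by (simp add: algebra_simps)
qed

theorem lemmaA7:
  fixes W :: "'w set" and P1 P2 :: "'w \<Rightarrow> real" and \<Delta> :: real
  assumes "finite W"
    and "0 \<le> \<Delta>"
    and "\<Delta> < 0.5"
    and "\<forall>w\<in>W. P1 w \<ge> 0" and "(\<Sum>w\<in>W. P1 w) = 1"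
    and "\<forall>w\<in>W. P2 w \<ge> 0" and "(\<Sum>w\<in>W. P2 w) = 1"
    and "\<forall>w\<in>W. P1 w \<le> 1 - \<Delta>"
    and "\<forall>w\<in>W. P2 w \<le> 1 - \<Delta>"
  shows "(\<Sum>w\<in>W. \<Sum>j\<in>W. min (P1 w) (P2 j) * (1 - P1 w) * (1 - P2 j))
           \<ge> \<Delta> * (1 - \<Delta>)^2 + 3 * \<Delta>^2 * (1 - \<Delta>)"
proof (cases "\<Delta> = 0")
  case True
  have "(\<Sum>w\<in>W. \<Sum>j\<in>W. min (P1 w) (P2 j) * (1 - P1 w) * (1 - P2 j)) \<ge> 0"
    using assms True by (intro sum_nonneg mult_nonneg_nonneg) auto
  then show ?thesis using True by simp
next
  case False
  then have d0: "0 < \<Delta>" using assms by simp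
  have d2: "\<Delta> < 1/2" using assms by simp
  have A1: "\<forall>w\<in>W. 0 \<le> P1 w \<and> P1 w \<le> 1 - \<Delta>" using assms by auto
  have A2: "\<forall>w\<in>W. 0 \<le> P2 w \<and> P2 w \<le> 1 - \<Delta>" using assms by auto
  have "(\<Sum>w\<in>W. \<Sum>j\<in>W. min (P1 w) (P2 j) * (1 - P1 w) * (1 - P2 j))
      = (\<Sum>w\<in>W. \<Sum>j\<in>W. KK (P2 j) (P1 w))" by (intro sum.cong refl) (simp add: KK_def min.commute algebra_simps)
  also have "\<dots> \<ge> (\<Sum>w\<in>W. KK \<Delta> (P1 w) + KK (1-\<Delta>) (P1 w))"
    using A1 d0 by (intro sum_mono oneD[OF assms(1) d0 d2 A2 assms(7)]) auto
  finally have s: "(\<Sum>w\<in>W. \<Sum>j\<in>W. min (P1 w) (P2 j) * (1 - P1 w) * (1 - P2 j))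
     \<ge> (\<Sum>w\<in>W. KK (P1 w) \<Delta>) + (\<Sum>w\<in>W. KK (P1 w) (1-\<Delta>))"
    by (simp add: sum.distrib KK_sym)
  have "(\<Sum>w\<in>W. KK (P1 w) \<Delta>) \<ge> KK \<Delta> \<Delta> + KK (1-\<Delta>) \<Delta>"
    using d0 d2 by (intro oneD[OF assms(1) d0 d2 A1 assms(5)]) auto
  moreover have "(\<Sum>w\<in>W. KK (P1 w) (1-\<Delta>)) \<ge> KK \<Delta> (1-\<Delta>) + KK (1-\<Delta>) (1-\<Delta>)"
    using d0 d2 by (intro oneD[OF assms(1) d0 d2 A1 assms(5)]) auto
  moreover have "KK \<Delta> \<Delta> + KK (1-\<Delta>) \<Delta> + (KK \<Delta> (1-\<Delta>) + KK (1-\<Delta>) (1-\<Delta>))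
     = \<Delta> * (1 - \<Delta>)^2 + 3 * \<Delta>^2 * (1 - \<Delta>)"
    using d2 by (simp add: KK_def min_def power2_eq_square algebra_simps)
  ultimately show ?thesis using s by linarith
qed

end
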